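(* $\lim_{n\to\infty}h(n)=1/\pi$.
   Context: A standardized Laplacian matrix of order $n$ is a real $n\times n$ matrix whose row sums are all $0$ and whose off-diagonal entries are nonpositive with absolute value at most $1/n$. For $n\ge2$, $h(n)$ is the supremum of $\operatorname{Im}\lambda$ over all eigenvalues $\lambda$ of all standardized Laplacian matrices of order $n$. *)

theory Defs
  imports Complex_Main "Jordan_Normal_Form.Char_Poly"
begin

definition standardized_laplacian :: "nat \<Rightarrow> real mat \<Rightarrow> bool" where
  "standardized_laplacian n A \<longleftrightarrow>
     A \<in> carrier_mat n n \<and>
     (\<forall>i<n. (\<Sum>j<n. A $$ (i, j)) = 0) \<and>
     (\<forall>i<n. \<forall>j<n. i \<noteq> j \<longrightarrow> A $$ (i, j) \<le> 0 \<and> \<bar>A $$ (i, j)\<bar> \<le> 1 / real n)"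

definition h :: "nat \<Rightarrow> real" where
  "h n = Sup {Im k | k A. standardized_laplacian n A \<and> eigenvalue (map_mat complex_of_real A) k}"

end

theory Submission
  imports Defs "HOL-Analysis.Analysis" "HOL-Real_Asymp.Real_Asymp"
begin


lemma meas_Icc: "measure lborel {l..u::real} = (if l \<le> u then u - l else 0)"
  by simp

lemma int_ind_prod:
  fixes p q :: real
  assumes "a \<ge> 0"
  shows "integral\<^sup>L lborel (\<lambda>t. indicator {p-a..p} t * indicator {q-a..q} t :: real)
     = max 0 (a - \<bar>p - q\<bar>)"
proof -
  have "(\<lambda>t. indicator {p-a..p} t * indicator {q-a..q} t :: real) = indicator ({p-a..p} \<inter> {q-a..q})"
    by (auto simp: indicator_def fun_eq_iff)
  also have "{p-a..p} \<inter> {q-a..q} = {max (p-a) (q-a) .. min p q}" by auto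
  finally show ?thesis using assms by (auto simp: max_def min_def)
qed

lemma line_ineq:
  fixes w y :: "'s \<Rightarrow> real"
  assumes S: "finite S" and w: "\<And>s. s \<in> S \<Longrightarrow> w s \<ge> 0"
    and y: "\<And>s. s \<in> S \<Longrightarrow> L0 \<le> y s \<and> y s \<le> L1"
    and a: "a \<ge> 0" and c: "c \<ge> 0" and L: "L0 \<le> L1"
  shows "2*c*a*(\<Sum>s\<in>S. w s) - c^2*(L1 - L0 + a)
     \<le> (\<Sum>s\<in>S. \<Sum>s'\<in>S. w s * w s' * max 0 (a - \<bar>y s - y s'\<bar>))"
proof -
  define N where "N t = (\<Sum>s\<in>S. w s * indicator {y s - a..y s} t)" for t :: real
  define S0 where "S0 = {L0 - a..L1}"
  have intI: "integrable lborel (indicator {u..v} :: real \<Rightarrow> real)" for u v :: real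
    by (rule integrable_real_indicator) (auto simp: emeasure_lborel_Icc_eq)
  have intN: "integrable lborel N" unfolding N_def
    by (auto intro!: intI)
  have intN2: "integrable lborel (\<lambda>t. N t * N t)"
  proof -
    have "(\<lambda>t. N t * N t) = (\<lambda>t. \<Sum>s\<in>S. \<Sum>s'\<in>S. w s * w s' * (indicator {y s - a..y s} t * indicator {y s' - a..y s'} t))"
      unfolding N_def by (auto simp: fun_eq_iff sum_distrib_left sum_distrib_right mult_ac)
    moreover have "integrable lborel (\<lambda>t. indicator {p-a..p} t * indicator {q-a..q} t :: real)" for p q
    proof -
      have "(\<lambda>t. indicator {p-a..p} t * indicator {q-a..q} t :: real) = indicator ({p-a..p} \<inter> {q-a..q})"
        by (auto simp: indicator_def fun_eq_iff)
      also have "{p-a..p} \<inter> {q-a..q} = {max (p-a) (q-a) .. min p q}" by auto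
      finally show ?thesis using intI by simp
    qed
    ultimately show ?thesis by (simp add: integrable_sum integrable_mult_right)
  qed
  have IN2: "integral\<^sup>L lborel (\<lambda>t. N t * N t) = (\<Sum>s\<in>S. \<Sum>s'\<in>S. w s * w s' * max 0 (a - \<bar>y s - y s'\<bar>))"
  proof -
    have "(\<lambda>t. N t * N t) = (\<lambda>t. \<Sum>s\<in>S. \<Sum>s'\<in>S. w s * w s' * (indicator {y s - a..y s} t * indicator {y s' - a..y s'} t))"
      unfolding N_def by (auto simp: fun_eq_iff sum_distrib_left sum_distrib_right mult_ac)
    moreover have ii: "integrable lborel (\<lambda>t. indicator {p-a..p} t * indicator {q-a..q} t :: real)" for p q
    proof -
      have "(\<lambda>t. indicator {p-a..p} t * indicator {q-a..q} t :: real) = indicator ({p-a..p} \<inter> {q-a..q})"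
        by (auto simp: indicator_def fun_eq_iff)
      also have "{p-a..p} \<inter> {q-a..q} = {max (p-a) (q-a) .. min p q}" by auto
      finally show ?thesis using intI by simp
    qed
    ultimately show ?thesis
      by (simp add: integral_sum integrable_sum integrable_mult_right ii int_ind_prod[OF a])
  qed
  have IN: "integral\<^sup>L lborel N = a * (\<Sum>s\<in>S. w s)"
    unfolding N_def using a
    by (simp add: integral_sum intI integrable_mult_right sum_distrib_left mult_ac)
  have IS0: "integral\<^sup>L lborel (indicator S0 :: real \<Rightarrow> real) = L1 - L0 + a"
    using a L by (simp add: S0_def)
  have sup: "N t = 0" if "t \<notin> S0" for t
  proof -
    have "indicator {y s - a..y s} t = (0::real)" if "s \<in> S" for s
      using y[OF that] \<open>t \<notin> S0\<close> unfolding S0_def by (auto simp: indicator_def)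
    then show ?thesis unfolding N_def by simp
  qed
  have pw: "2*c*N t - c^2 * indicator S0 t \<le> N t * N t" for t
  proof (cases "t \<in> S0")
    case True
    have "0 \<le> (N t - c)^2" by simp
    then show ?thesis using True by (simp add: power2_eq_square algebra_simps)
  next
    case False
    then show ?thesis using sup[OF False] by simp
  qed
  have intS0: "integrable lborel (indicator S0 :: real \<Rightarrow> real)" unfolding S0_def by (rule intI)
  have "integral\<^sup>L lborel (\<lambda>t. 2*c*N t - c^2 * indicator S0 t) \<le> integral\<^sup>L lborel (\<lambda>t. N t * N t)"
    by (rule integral_mono) (use intN intS0 intN2 pw in auto)
  moreover have "integral\<^sup>L lborel (\<lambda>t. 2*c*N t - c^2 * indicator S0 t) = 2*c*(a * (\<Sum>s\<in>S. w s)) - c^2*(L1 - L0 + a)"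
    using intN intS0 IN IS0 by simp
  ultimately show ?thesis using IN2 by (simp add: mult_ac)
qed


definition dd :: "real \<Rightarrow> real" where "dd t = min \<bar>t\<bar> (pi - \<bar>t\<bar>)"

lemma dd_le: fixes m :: int assumes "\<bar>D\<bar> < pi" shows "dd D \<le> \<bar>D + m * pi\<bar>"
proof (cases "m = 0")
  case True then show ?thesis by (simp add: dd_def)
next
  case False
  then have "\<bar>real_of_int m\<bar> \<ge> 1" by linarith
  then have "\<bar>m * pi\<bar> \<ge> pi" by (simp add: abs_mult)
  then have "\<bar>D + m*pi\<bar> \<ge> pi - \<bar>D\<bar>" by linarith
  then show ?thesis by (simp add: dd_def)
qed

lemma sum_prod_cong:
  assumes "\<And>s. s \<in> A \<times> B \<Longrightarrow> g s = f (fst s) (snd s)"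
  shows "(\<Sum>s\<in>A\<times>B. g s) = (\<Sum>a\<in>A. \<Sum>b\<in>B. f a b)"
proof -
  have "(\<Sum>s\<in>A\<times>B. g s) = (\<Sum>s\<in>A\<times>B. f (fst s) (snd s))" by (rule sum.cong) (use assms in auto)
  also have "\<dots> = (\<Sum>a\<in>A. \<Sum>b\<in>B. f a b)" by (simp add: sum.cartesian_product case_prod_beta)
  finally show ?thesis .
qed

lemma shift_sum_bound:
  assumes D: "\<bar>D\<bar> < pi" and a: "0 \<le> a" "a \<le> pi/2"
  shows "(\<Sum>l<K. max 0 (a - \<bar>D + (real k - real l) * pi\<bar>)) \<le> max 0 (a - dd D)"
proof -
  define g where "g l = max 0 (a - \<bar>D + (real k - real l) * pi\<bar>)" for l :: nat
  have g0: "g l \<ge> 0" for l by (simp add: g_def)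
  have gle: "g l \<le> max 0 (a - dd D)" for l
  proof -
    have "dd D \<le> \<bar>D + of_int (int k - int l) * pi\<bar>" by (rule dd_le[OF D])
    then show ?thesis by (simp add: g_def)
  qed
  define P where "P = {l\<in>{..<K}. g l \<noteq> 0}"
  have uniq: "l1 = l2" if "l1 \<in> P" "l2 \<in> P" for l1 l2
  proof -
    have "\<bar>D + (real k - real l1) * pi\<bar> < pi/2" "\<bar>D + (real k - real l2) * pi\<bar> < pi/2"
      using that a by (auto simp: P_def g_def max_def split: if_splits)
    moreover have "(real l1 - real l2) * pi = (D + (real k - real l2) * pi) - (D + (real k - real l1) * pi)"
      by (simp add: algebra_simps)
    moreover have "\<bar>(D + (real k - real l2) * pi) - (D + (real k - real l1) * pi)\<bar> \<le> \<bar>D + (real k - real l2) * pi\<bar> + \<bar>D + (real k - real l1) * pi\<bar>"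
      by (rule abs_triangle_ineq4)
    ultimately have "\<bar>(real l1 - real l2) * pi\<bar> < pi" by linarith
    then have "\<bar>real l1 - real l2\<bar> < 1" by (simp add: abs_mult)
    then show ?thesis by linarith
  qed
  have "(\<Sum>l<K. g l) = (\<Sum>l\<in>P. g l)"
    by (rule sum.mono_neutral_right) (auto simp: P_def)
  also have "\<dots> \<le> max 0 (a - dd D)"
  proof (cases "P = {}")
    case True then show ?thesis by simp
  next
    case False
    then obtain l0 where "l0 \<in> P" by auto
    then have "P = {l0}" using uniq by auto
    then show ?thesis using gle by simp
  qed
  finally show ?thesis by (simp add: g_def)
qed

lemma circle_a:
  fixes w x :: "'i \<Rightarrow> real"
  assumes I: "finite I" and w: "\<And>i. i \<in> I \<Longrightarrow> w i \<ge> 0"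
    and x: "\<And>i. i \<in> I \<Longrightarrow> 0 \<le> x i \<and> x i < pi"
    and a: "0 \<le> a" "a \<le> pi/2" and K: "K \<ge> 1"
  shows "a^2 * (\<Sum>i\<in>I. w i)^2 / pi - (\<Sum>i\<in>I. w i)^2 * pi / (8 * real K)
     \<le> (\<Sum>i\<in>I. \<Sum>j\<in>I. w i * w j * max 0 (a - dd (x i - x j)))"
proof -
  define W where "W = (\<Sum>i\<in>I. w i)"
  define G where "G = (\<Sum>i\<in>I. \<Sum>j\<in>I. w i * w j * max 0 (a - dd (x i - x j)))"
  have W0: "W \<ge> 0" unfolding W_def using w by (simp add: sum_nonneg)
  define S where "S = I \<times> {..<K}"
  define w' where "w' s = w (fst s)" for s :: "'i \<times> nat"
  define y where "y s = x (fst s) + real (snd s) * pi" for s :: "'i \<times> nat"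
  define c where "c = a * W / pi"
  have c0: "c \<ge> 0" unfolding c_def using a W0 by simp
  have yb: "0 \<le> y s \<and> y s \<le> real K * pi" if "s \<in> S" for s
  proof -
    obtain i k where s0: "s = (i,k)" by (cases s)
    then have s: "s = (i,k)" "i \<in> I" "k < K" using that unfolding S_def by auto
    have "real k + 1 \<le> real K" using s by simp
    then have "(real k + 1) * pi \<le> real K * pi" by (rule mult_right_mono) auto
    then have "real k * pi + pi \<le> real K * pi" by (simp add: algebra_simps)
    then show ?thesis using x[OF s(2)] s by (simp add: y_def)
  qed
  have line: "2*c*a*(\<Sum>s\<in>S. w' s) - c^2*(real K * pi - 0 + a)
     \<le> (\<Sum>s\<in>S. \<Sum>s'\<in>S. w' s * w' s' * max 0 (a - \<bar>y s - y s'\<bar>))"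
    by (rule line_ineq) (use I w a c0 yb in \<open>auto simp: S_def w'_def\<close>)
  have sumw: "(\<Sum>s\<in>S. w' s) = real K * W"
  proof -
    have "(\<Sum>s\<in>S. w' s) = (\<Sum>(i,k)\<in>I \<times> {..<K}. w i)" unfolding S_def w'_def by (simp add: split_beta)
    also have "\<dots> = (\<Sum>i\<in>I. \<Sum>k<K. w i)" by (rule sum.cartesian_product[symmetric])
    finally show ?thesis by (simp add: W_def sum_distrib_left)
  qed
  have inner: "(\<Sum>s'\<in>S. w' (i,k) * w' s' * max 0 (a - \<bar>y (i,k) - y s'\<bar>))
       \<le> (\<Sum>j\<in>I. w i * w j * max 0 (a - dd (x i - x j)))" if i: "i \<in> I" and k: "k < K" for i k
  proof -
    have "(\<Sum>s'\<in>S. w' (i,k) * w' s' * max 0 (a - \<bar>y (i,k) - y s'\<bar>))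
        = (\<Sum>j\<in>I. \<Sum>l<K. w i * w j * max 0 (a - \<bar>(x i - x j) + (real k - real l) * pi\<bar>))"
      unfolding S_def by (rule sum_prod_cong) (auto simp: w'_def y_def algebra_simps)
    also have "\<dots> = (\<Sum>j\<in>I. w i * w j * (\<Sum>l<K. max 0 (a - \<bar>(x i - x j) + (real k - real l) * pi\<bar>)))"
      by (simp add: sum_distrib_left)
    also have "\<dots> \<le> (\<Sum>j\<in>I. w i * w j * max 0 (a - dd (x i - x j)))"
    proof (rule sum_mono)
      fix j assume j: "j \<in> I"
      have "\<bar>x i - x j\<bar> < pi" using x[OF i] x[OF j] by linarith
      then show "w i * w j * (\<Sum>l<K. max 0 (a - \<bar>(x i - x j) + (real k - real l) * pi\<bar>))
            \<le> w i * w j * max 0 (a - dd (x i - x j))"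
        using shift_sum_bound[OF _ a, where D="x i - x j" and K=K and k=k] w[OF i] w[OF j]
        by (intro mult_left_mono) auto
    qed
    finally show ?thesis .
  qed
  have "(\<Sum>s\<in>S. \<Sum>s'\<in>S. w' s * w' s' * max 0 (a - \<bar>y s - y s'\<bar>))
      = (\<Sum>i\<in>I. \<Sum>k<K. \<Sum>s'\<in>S. w' (i,k) * w' s' * max 0 (a - \<bar>y (i,k) - y s'\<bar>))"
    unfolding S_def by (rule sum_prod_cong) auto
  also have "\<dots> \<le> (\<Sum>i\<in>I. \<Sum>k<K. \<Sum>j\<in>I. w i * w j * max 0 (a - dd (x i - x j)))"
    by (intro sum_mono inner) auto
  also have "\<dots> = real K * G" unfolding G_def by (simp add: sum_distrib_left)
  finally have KG: "2*c*a*(real K * W) - c^2*(real K * pi + a) \<le> real K * G"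
    using line sumw by simp
  have Kpos: "real K > 0" using K by simp
  have e1: "2*c*a*(real K * W) - c^2*(real K * pi + a) = real K * (a^2*W^2/pi) - a^3*W^2/pi^2"
    unfolding c_def by (simp add: field_simps power2_eq_square power3_eq_cube)
  have a3: "a^3 \<le> (pi/2)^3" using a by (intro power_mono) auto
  have "a^3*W^2/pi^2 \<le> (pi/2)^3 * W^2/pi^2"
    by (intro divide_right_mono mult_right_mono a3) auto
  also have "\<dots> = W^2 * pi / 8" by (simp add: power3_eq_cube power2_eq_square field_simps)
  finally have a3b: "a^3*W^2/pi^2 \<le> W^2 * pi / 8" .
  have "real K * (a^2*W^2/pi) - W^2 * pi / 8 \<le> real K * G" using KG e1 a3b by linarith
  then have "(real K * (a^2*W^2/pi) - W^2 * pi / 8) / real K \<le> G"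
    using Kpos by (simp add: divide_le_eq mult.commute)
  moreover have "(real K * (a^2*W^2/pi) - W^2 * pi / 8) / real K = a^2*W^2/pi - W^2 * pi / (8 * real K)"
    using Kpos by (simp add: field_simps)
  ultimately show ?thesis unfolding G_def W_def by simp
qed



lemma ftc_real:
  fixes F f :: "real \<Rightarrow> real"
  assumes "a \<le> b" and "\<And>x. (F has_real_derivative f x) (at x)"
  shows "(f has_integral (F b - F a)) {a..b}"
  by (rule fundamental_theorem_of_calculus[OF assms(1)])
     (use assms(2) in \<open>auto simp: has_real_derivative_iff_has_vector_derivative[symmetric] intro: has_field_derivative_at_within\<close>)

lemma const_int: "((\<lambda>a. sin a / 2) has_integral (1/2)) {0..pi/2}"
proof -
  have "((\<lambda>a. sin a / 2) has_integral ((\<lambda>a. - cos a / 2) (pi/2) - (\<lambda>a. - cos a / 2) 0)) {0..pi/2}"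
    by (rule ftc_real) (auto intro!: derivative_eq_intros)
  then show ?thesis by simp
qed

lemma a2_int: "((\<lambda>a. a^2 * (sin a / 2)) has_integral ((pi - 2)/2)) {0..pi/2}"
proof -
  define F :: "real \<Rightarrow> real" where "F = (\<lambda>u. (2 * u * sin u + 2 * cos u - u^2 * cos u) / 2)"
  have "((\<lambda>a. a^2 * (sin a / 2)) has_integral (F (pi/2) - F 0)) {0..pi/2}"
    unfolding F_def
    by (rule ftc_real) (auto intro!: derivative_eq_intros simp: field_simps power2_eq_square)
  moreover have "F (pi/2) - F 0 = (pi - 2)/2" by (simp add: F_def field_simps)
  ultimately show ?thesis by simp
qed

lemma kern_int:
  assumes d: "0 \<le> d" "d \<le> pi/2"
  shows "((\<lambda>a. max 0 (a - d) * (sin a / 2)) has_integral (1/2 - sin d / 2)) {0..pi/2}"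
proof -
  have i1: "((\<lambda>a. max 0 (a - d) * (sin a / 2)) has_integral 0) {0..d}"
    by (rule has_integral_eq[where f = "\<lambda>_. 0"]) auto
  define F where "F a = (sin a - (a - d) * cos a) / 2" for a :: real
  have "((\<lambda>a. (a - d) * (sin a / 2)) has_integral (F (pi/2) - F d)) {d..pi/2}"
    unfolding F_def
    by (rule ftc_real) (use d in \<open>auto intro!: derivative_eq_intros simp: field_simps\<close>)
  moreover have "F (pi/2) - F d = 1/2 - sin d / 2" by (simp add: F_def)
  ultimately have i2': "((\<lambda>a. (a - d) * (sin a / 2)) has_integral (1/2 - sin d / 2)) {d..pi/2}" by simp
  have i2: "((\<lambda>a. max 0 (a - d) * (sin a / 2)) has_integral (1/2 - sin d / 2)) {d..pi/2}"
    by (rule has_integral_eq[OF _ i2']) auto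
  show ?thesis using has_integral_combine[OF d i1 i2] by simp
qed

lemma sin_dd: assumes "\<bar>t\<bar> < pi" shows "sin (dd t) = \<bar>sin t\<bar>"
proof -
  have "sin \<bar>t\<bar> = \<bar>sin t\<bar>"
  proof (cases "t \<ge> 0")
    case True
    then have "sin t \<ge> 0" using assms by (intro sin_ge_zero) auto
    then show ?thesis using True by simp
  next
    case False
    then have "sin (-t) \<ge> 0" using assms by (intro sin_ge_zero) auto
    then show ?thesis using False by simp
  qed
  moreover have "sin (pi - \<bar>t\<bar>) = sin \<bar>t\<bar>" by simp
  ultimately show ?thesis unfolding dd_def by (simp add: min_def)
qed

lemma dd_range: assumes "\<bar>t\<bar> < pi" shows "0 \<le> dd t \<and> dd t \<le> pi/2"
  using assms unfolding dd_def by (auto simp: min_def)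

lemma archi_bound:
  fixes X B C :: real
  assumes "C \<ge> 0" and "\<And>K::nat. K \<ge> 1 \<Longrightarrow> X \<le> B + C / real K"
  shows "X \<le> B"
proof (rule ccontr)
  assume "\<not> X \<le> B"
  then have pos: "X - B > 0" by simp
  obtain K :: nat where K: "real K > C / (X - B)" using reals_Archimedean2 by blast
  define K' where "K' = max K 1"
  have K'1: "K' \<ge> 1" by (simp add: K'_def)
  have "real K' > C / (X - B)" using K by (simp add: K'_def)
  then have "real K' * (X - B) > C" using pos by (simp add: divide_less_eq)
  then have "C / real K' < X - B" using K'1 by (simp add: divide_less_eq mult.commute)
  with assms(2)[OF K'1] show False by simp
qed

lemma aux_lin: "a - q * (1/2) \<le> w/2 - x/2 \<Longrightarrow> a = w/2 - p \<Longrightarrow> x \<le> 2*p + (q::real)"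
  by linarith

lemma G_angles:
  fixes w x :: "'i \<Rightarrow> real"
  assumes I: "finite I" and w: "\<And>i. i \<in> I \<Longrightarrow> w i \<ge> 0"
    and x: "\<And>i. i \<in> I \<Longrightarrow> 0 \<le> x i \<and> x i < pi"
  shows "(\<Sum>i\<in>I. \<Sum>j\<in>I. w i * w j * \<bar>sin (x i - x j)\<bar>) \<le> 2 / pi * (\<Sum>i\<in>I. w i)^2"
proof -
  define W where "W = (\<Sum>i\<in>I. w i)"
  define X where "X = (\<Sum>i\<in>I. \<Sum>j\<in>I. w i * w j * \<bar>sin (x i - x j)\<bar>)"
  have dlt: "\<bar>x i - x j\<bar> < pi" if "i \<in> I" "j \<in> I" for i j
    using x[OF that(1)] x[OF that(2)] by linarith
  have "X \<le> 2 / pi * W^2 + (W^2 * pi / 8) / real K" if K: "K \<ge> 1" for K :: nat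
  proof -
    define g where "g a = (\<Sum>i\<in>I. \<Sum>j\<in>I. w i * w j * max 0 (a - dd (x i - x j)))" for a
    have i1: "((\<lambda>a. g a * (sin a / 2)) has_integral
         (\<Sum>i\<in>I. \<Sum>j\<in>I. w i * w j * (1/2 - sin (dd (x i - x j)) / 2))) {0..pi/2}"
    proof -
      have "((\<lambda>a. \<Sum>i\<in>I. \<Sum>j\<in>I. w i * w j * (max 0 (a - dd (x i - x j)) * (sin a / 2))) has_integral
         (\<Sum>i\<in>I. \<Sum>j\<in>I. w i * w j * (1/2 - sin (dd (x i - x j)) / 2))) {0..pi/2}"
        by (intro has_integral_sum I has_integral_mult_right kern_int) (use dd_range dlt in auto)
      then show ?thesis
        by (rule has_integral_eq[rotated]) (simp add: g_def sum_distrib_right mult.assoc)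
    qed
    have i2: "((\<lambda>a. (a^2 * (W^2 / pi) - W^2 * pi / (8 * real K)) * (sin a / 2)) has_integral
         ((pi - 2)/2 * (W^2 / pi) - W^2 * pi / (8 * real K) * (1/2))) {0..pi/2}"
    proof -
      have A: "((\<lambda>a. a^2 * (sin a / 2) * (W^2/pi)) has_integral (pi-2)/2 * (W^2/pi)) {0..pi/2}"
        by (rule has_integral_mult_left[OF a2_int])
      have B: "((\<lambda>a. W^2 * pi / (8 * real K) * (sin a / 2)) has_integral W^2 * pi / (8 * real K) * (1/2)) {0..pi/2}"
        by (rule has_integral_mult_right[OF const_int])
      show ?thesis
        by (rule has_integral_eq[OF _ has_integral_diff[OF A B]]) (simp add: algebra_simps)
    qed
    have le: "((pi - 2)/2 * (W^2 / pi) - W^2 * pi / (8 * real K) * (1/2))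
        \<le> (\<Sum>i\<in>I. \<Sum>j\<in>I. w i * w j * (1/2 - sin (dd (x i - x j)) / 2))"
    proof (rule has_integral_le[OF i2 i1])
      fix a assume a: "a \<in> {0..pi/2}"
      have "a^2 * W^2 / pi - W^2 * pi / (8 * real K) \<le> g a"
        unfolding g_def W_def by (rule circle_a[OF I w x _ _ K]) (use a in auto)
      moreover have "sin a \<ge> 0" using a by (intro sin_ge_zero) auto
      ultimately show "(a^2 * (W^2 / pi) - W^2 * pi / (8 * real K)) * (sin a / 2) \<le> g a * (sin a / 2)"
        by (intro mult_right_mono) auto
    qed
    have "(\<Sum>i\<in>I. \<Sum>j\<in>I. w i * w j * (1/2 - sin (dd (x i - x j)) / 2))
        = (\<Sum>i\<in>I. \<Sum>j\<in>I. w i * w j) / 2 - X / 2"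
    proof -
      have "(\<Sum>i\<in>I. \<Sum>j\<in>I. w i * w j * (1/2 - sin (dd (x i - x j)) / 2))
          = (\<Sum>i\<in>I. \<Sum>j\<in>I. w i * w j / 2 - w i * w j * \<bar>sin (x i - x j)\<bar> / 2)"
        by (intro sum.cong refl) (simp add: sin_dd dlt right_diff_distrib)
      also have "\<dots> = (\<Sum>i\<in>I. \<Sum>j\<in>I. w i * w j) / 2 - X / 2"
        unfolding X_def by (simp add: sum_subtractf sum_divide_distrib)
      finally show ?thesis .
    qed
    also have "(\<Sum>i\<in>I. \<Sum>j\<in>I. w i * w j) = W^2"
      by (simp add: W_def power2_eq_square sum_product)
    finally have "(pi - 2)/2 * (W^2 / pi) - W^2 * pi / (8 * real K) * (1/2) \<le> W^2 / 2 - X / 2"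
      using le by simp
    moreover have "(pi - 2)/2 * (W^2 / pi) = W^2/2 - W^2/pi" by (simp add: field_simps)
    ultimately have "X \<le> 2 * (W^2 / pi) + W^2 * pi / (8 * real K)" by (rule aux_lin)
    moreover have "2 * (W^2 / pi) = 2 / pi * W^2" by simp
    moreover have "W^2 * pi / (8 * real K) = (W^2 * pi / 8) / real K" by simp
    ultimately show ?thesis by linarith
  qed
  then have Xb: "\<And>K::nat. K \<ge> 1 \<Longrightarrow> X \<le> 2 / pi * W^2 + (W^2 * pi / 8) / real K" .
  have C0: "0 \<le> W^2 * pi / 8" by simp
  have "X \<le> 2 / pi * W^2" by (rule archi_bound[OF C0 Xb])
  then show ?thesis unfolding X_def W_def .
qed



lemma abs_sin_int_pi: "\<bar>sin (t + of_int m * pi)\<bar> = \<bar>sin t\<bar>"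
proof -
  have s0: "sin (of_int m * pi) = 0" by (auto simp: sin_zero_iff_int2)
  then have "(cos (of_int m * pi))^2 = 1" using sin_cos_squared_add[of "of_int m * pi"] by simp
  then have "\<bar>cos (of_int m * pi)\<bar> = 1"
    by (metis abs_1 abs_power2 power2_eq_1_iff abs_minus_cancel)
  then show ?thesis by (simp add: sin_add s0 abs_mult)
qed

lemma Im_cnj_mult: "Im (cnj z * w) = cmod z * cmod w * sin (Arg w - Arg z)"
proof -
  have "cnj z * w = cnj (rcis (cmod z) (Arg z)) * rcis (cmod w) (Arg w)"
    by (simp add: rcis_cmod_Arg)
  also have "cnj (rcis (cmod z) (Arg z)) = rcis (cmod z) (- Arg z)"
    by (simp add: rcis_def cis_cnj)
  finally show ?thesis by (simp add: rcis_mult)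
qed

lemma G_complex:
  fixes z :: "'i \<Rightarrow> complex"
  assumes I: "finite I"
  shows "(\<Sum>i\<in>I. \<Sum>j\<in>I. \<bar>Im (cnj (z i) * z j)\<bar>) \<le> 2 / pi * (\<Sum>i\<in>I. cmod (z i))^2"
proof -
  define m where "m i = \<lfloor>Arg (z i) / pi\<rfloor>" for i
  define x where "x i = Arg (z i) - of_int (m i) * pi" for i
  have xr: "0 \<le> x i \<and> x i < pi" for i
  proof -
    have "of_int (m i) \<le> Arg (z i) / pi" "Arg (z i) / pi < of_int (m i) + 1"
      unfolding m_def by linarith+
    then have "of_int (m i) * pi \<le> Arg (z i)" "Arg (z i) < (of_int (m i) + 1) * pi"
      by (simp_all add: divide_le_eq less_divide_eq mult.commute pos_le_divide_eq pos_divide_less_eq)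
    then show ?thesis unfolding x_def by (simp add: algebra_simps)
  qed
  have "\<bar>Im (cnj (z i) * z j)\<bar> = cmod (z i) * cmod (z j) * \<bar>sin (x i - x j)\<bar>" for i j
  proof -
    have "Arg (z j) - Arg (z i) = (x j - x i) + of_int (m j - m i) * pi"
      by (simp add: x_def algebra_simps)
    then have "\<bar>sin (Arg (z j) - Arg (z i))\<bar> = \<bar>sin (x j - x i)\<bar>"
      by (simp only: abs_sin_int_pi)
    also have "\<dots> = \<bar>sin (x i - x j)\<bar>"
      by (metis abs_minus_cancel minus_diff_eq sin_minus)
    finally have e: "\<bar>sin (Arg (z j) - Arg (z i))\<bar> = \<bar>sin (x i - x j)\<bar>" .
    have "\<bar>Im (cnj (z i) * z j)\<bar> = \<bar>cmod (z i) * cmod (z j) * sin (Arg (z j) - Arg (z i))\<bar>"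
      by (simp only: Im_cnj_mult)
    also have "\<dots> = cmod (z i) * cmod (z j) * \<bar>sin (Arg (z j) - Arg (z i))\<bar>"
      by (simp add: abs_mult)
    finally show ?thesis using e by simp
  qed
  then have "(\<Sum>i\<in>I. \<Sum>j\<in>I. \<bar>Im (cnj (z i) * z j)\<bar>)
      = (\<Sum>i\<in>I. \<Sum>j\<in>I. cmod (z i) * cmod (z j) * \<bar>sin (x i - x j)\<bar>)" by simp
  also have "\<dots> \<le> 2 / pi * (\<Sum>i\<in>I. cmod (z i))^2"
    by (rule G_angles[OF I]) (use xr in auto)
  finally show ?thesis .
qed



lemma sum_sq_le: fixes r :: "nat \<Rightarrow> real"
  shows "(\<Sum>i<n. r i)^2 \<le> real n * (\<Sum>i<n. (r i)^2)"
proof -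
  have "(\<Sum>i<n. r i)^2 = (\<Sum>i<n. \<Sum>j<n. r i * r j)" by (simp add: power2_eq_square sum_product)
  also have "\<dots> \<le> (\<Sum>i<n. \<Sum>j<n. ((r i)^2 + (r j)^2) / 2)"
  proof (intro sum_mono)
    fix i j
    have "0 \<le> (r i - r j)^2" by simp
    then show "r i * r j \<le> ((r i)^2 + (r j)^2) / 2" by (simp add: power2_eq_square algebra_simps)
  qed
  also have "\<dots> = real n * (\<Sum>i<n. (r i)^2)"
    by (simp add: sum_divide_distrib[symmetric] sum.distrib sum_distrib_left[symmetric] sum.swap[of _ "{..<n}" "{..<n}"] field_simps)
  finally show ?thesis .
qed

lemma coef_bound:
  fixes A y :: real assumes "A \<le> 0" "- A \<le> c"
  shows "A * y \<le> c * (\<bar>y\<bar> - y) / 2"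
proof (cases "y \<ge> 0")
  case True then show ?thesis using assms by (simp add: mult_nonpos_nonneg)
next
  case False
  then have "(-A) * (-y) \<le> c * (-y)" using assms by (intro mult_right_mono) auto
  then show ?thesis using False by simp
qed

lemma upper_bound:
  assumes L: "standardized_laplacian n A" and ev: "eigenvalue (map_mat complex_of_real A) k"
  shows "Im k \<le> 1 / pi"
proof -
  have Ac: "A \<in> carrier_mat n n" and rows: "\<And>i. i < n \<Longrightarrow> (\<Sum>j<n. A $$ (i, j)) = 0"
    and off: "\<And>i j. i < n \<Longrightarrow> j < n \<Longrightarrow> i \<noteq> j \<Longrightarrow> A $$ (i, j) \<le> 0 \<and> \<bar>A $$ (i, j)\<bar> \<le> 1 / real n"
    using L unfolding standardized_laplacian_def by blast+
  obtain v where v: "v \<in> carrier_vec n" "v \<noteq> 0\<^sub>v n" "map_mat complex_of_real A *\<^sub>v v = k \<cdot>\<^sub>v v"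
    using ev Ac unfolding eigenvalue_def eigenvector_def by auto
  have eq: "(\<Sum>j<n. complex_of_real (A $$ (i, j)) * v $ j) = k * v $ i" if i: "i < n" for i
  proof -
    have "(map_mat complex_of_real A *\<^sub>v v) $ i = k * v $ i" using v(3) v(1) i by simp
    then show ?thesis using Ac v(1) i by (simp add: scalar_prod_def lessThan_atLeast0)
  qed
  define c where "c i j = cnj (v $ i) * v $ j" for i j
  define S where "S = (\<Sum>i<n. (cmod (v $ i))^2)"
  have "(\<Sum>i<n. \<Sum>j<n. complex_of_real (A $$ (i, j)) * c i j) = (\<Sum>i<n. cnj (v $ i) * (k * v $ i))"
  proof (rule sum.cong[OF refl])
    fix i assume "i \<in> {..<n}"
    then have "(\<Sum>j<n. complex_of_real (A $$ (i, j)) * v $ j) = k * v $ i" using eq by simp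
    then have "cnj (v $ i) * (\<Sum>j<n. complex_of_real (A $$ (i, j)) * v $ j) = cnj (v $ i) * (k * v $ i)" by simp
    then show "(\<Sum>j<n. complex_of_real (A $$ (i, j)) * c i j) = cnj (v $ i) * (k * v $ i)"
      unfolding c_def by (simp add: sum_distrib_left mult_ac)
  qed
  also have "\<dots> = k * complex_of_real S"
  proof -
    have "cnj (v $ i) * (k * v $ i) = k * complex_of_real ((cmod (v $ i))^2)" for i
    proof -
      have "cnj (v $ i) * v $ i = complex_of_real ((cmod (v $ i))^2)"
        by (metis complex_norm_square mult.commute)
      then show ?thesis by (metis mult.left_commute)
    qed
    then have "(\<Sum>i<n. cnj (v $ i) * (k * v $ i)) = (\<Sum>i<n. k * complex_of_real ((cmod (v $ i))^2))"
      by (intro sum.cong) auto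
    also have "\<dots> = k * complex_of_real S" unfolding S_def of_real_sum sum_distrib_left ..
    finally show ?thesis .
  qed
  finally have eq2: "(\<Sum>i<n. \<Sum>j<n. complex_of_real (A $$ (i, j)) * c i j) = k * complex_of_real S" .
  have "Im (\<Sum>i<n. \<Sum>j<n. complex_of_real (A $$ (i, j)) * c i j) = (\<Sum>i<n. \<Sum>j<n. A $$ (i, j) * Im (c i j))"
    by (simp add: Im_sum)
  moreover have "Im (k * complex_of_real S) = Im k * S" by simp
  ultimately have eqIm: "(\<Sum>i<n. \<Sum>j<n. A $$ (i, j) * Im (c i j)) = Im k * S"
    using eq2 by simp
  have npos: "n > 0"
  proof (rule ccontr)
    assume "\<not> n > 0"
    then have "n = 0" by simp
    then have "v = 0\<^sub>v n" using v(1) by (intro eq_vecI) auto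
    with v(2) show False by simp
  qed
  obtain i0 where i0: "i0 < n" "v $ i0 \<noteq> 0"
  proof (rule ccontr)
    assume "\<not> thesis"
    then have "\<And>i. i < n \<Longrightarrow> v $ i = 0" using that by blast
    then have "v = 0\<^sub>v n" using v(1) by (intro eq_vecI) auto
    with v(2) show False by simp
  qed
  have Spos: "S > 0"
  proof -
    have "S \<ge> (cmod (v $ i0))^2" unfolding S_def
      by (rule member_le_sum) (use i0 in auto)
    moreover have "(cmod (v $ i0))^2 > 0" using i0 by simp
    ultimately show ?thesis by linarith
  qed
  have anti: "Im (c j i) = - Im (c i j)" for i j
    unfolding c_def by (simp add: algebra_simps)
  have diag: "Im (c i i) = 0" for i unfolding c_def by (simp add: complex_mult_cnj)
  define X where "X = (\<Sum>i<n. \<Sum>j<n. Im (c i j))"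
  have "X = (\<Sum>j<n. \<Sum>i<n. Im (c i j))" unfolding X_def by (rule sum.swap)
  also have "\<dots> = (\<Sum>j<n. \<Sum>i<n. - Im (c j i))" by (intro sum.cong refl) (rule anti)
  also have "\<dots> = - X" unfolding X_def by (simp add: sum_negf)
  finally have X0: "X = 0" by simp
  define Y where "Y = (\<Sum>i<n. \<Sum>j<n. \<bar>Im (c i j)\<bar>)"
  have "Im k * S \<le> (\<Sum>i<n. \<Sum>j<n. (1 / real n) * (\<bar>Im (c i j)\<bar> - Im (c i j)) / 2)"
    unfolding eqIm[symmetric]
  proof (intro sum_mono)
    fix i j assume i: "i \<in> {..<n}" and j: "j \<in> {..<n}"
    show "A $$ (i, j) * Im (c i j) \<le> 1 / real n * (\<bar>Im (c i j)\<bar> - Im (c i j)) / 2"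
    proof (cases "i = j")
      case True then show ?thesis using diag by simp
    next
      case False
      then show ?thesis using off[of i j] i j by (intro coef_bound) auto
    qed
  qed
  also have "\<dots> = (\<Sum>i<n. \<Sum>j<n. \<bar>Im (c i j)\<bar> / (2 * real n) - Im (c i j) / (2 * real n))"
    by (intro sum.cong refl) (simp add: field_simps)
  also have "\<dots> = Y / (2 * real n) - X / (2 * real n)"
    unfolding X_def Y_def by (simp add: sum_subtractf sum_divide_distrib)
  also have "\<dots> = Y / (2 * real n)" using X0 by simp
  finally have b1: "Im k * S \<le> Y / (2 * real n)" .
  have "Y \<le> 2 / pi * (\<Sum>i<n. cmod (v $ i))^2"
    unfolding Y_def c_def by (rule G_complex) simp
  also have "\<dots> \<le> 2 / pi * (real n * S)"
    unfolding S_def by (intro mult_left_mono sum_sq_le) auto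
  finally have "Y / (2 * real n) \<le> 2 / pi * (real n * S) / (2 * real n)"
    using npos by (intro divide_right_mono) auto
  also have "\<dots> = S / pi" using npos by (simp add: field_simps)
  finally have "Im k * S \<le> S / pi" using b1 by linarith
  then show ?thesis using Spos by (simp add: field_simps)
qed



lemma sin_telescope:
  "(\<Sum>m\<in>{1..K::nat}. sin (real m * t)) * (2 * sin (t/2)) = cos (t/2) - cos ((real K + 1/2) * t)"
proof (induction K)
  case 0 then show ?case by simp
next
  case (Suc K)
  have "2 * sin ((real K + 1) * t) * sin (t/2) = cos ((real K + 1/2) * t) - cos ((real K + 3/2) * t)"
  proof -
    have "cos ((real K + 1) * t - t/2) - cos ((real K + 1) * t + t/2) = 2 * sin ((real K + 1) * t) * sin (t/2)"
      by (simp add: cos_diff cos_add)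
    moreover have "(real K + 1) * t - t/2 = (real K + 1/2) * t" "(real K + 1) * t + t/2 = (real K + 3/2) * t"
      by (simp_all add: algebra_simps)
    ultimately show ?thesis by simp
  qed
  then show ?case using Suc by (simp add: algebra_simps)
qed

definition ee :: "nat \<Rightarrow> nat \<Rightarrow> complex" where "ee n m = cis (- (2 * pi * real m / real n))"

lemma ee_mult: "ee n a * ee n b = ee n (a + b)"
  by (simp add: ee_def cis_mult algebra_simps add_divide_distrib)

lemma ee_per: assumes "n > 0" shows "ee n (a + n * q) = ee n a"
proof -
  have "- (2 * pi * real (a + n * q) / real n) = - (2 * pi * real a / real n) + 2 * pi * real_of_int (- int q)"
    using assms by (simp add: field_simps)
  then have "ee n (a + n * q) = cis (- (2 * pi * real a / real n)) * cis (2 * pi * real_of_int (- int q))"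
    by (simp add: ee_def cis_mult)
  also have "cis (2 * pi * real_of_int (- int q)) = 1" by (rule cis_multiple_2pi) simp
  finally show ?thesis by (simp add: ee_def)
qed

lemma ee_mod: assumes "n > 0" shows "ee n (a mod n) = ee n a"
  using ee_per[OF assms, of "a mod n" "a div n"] by simp

lemma Im_ee: "Im (ee n m) = - sin (2 * pi * real m / real n)"
  by (simp add: ee_def)

definition md :: "nat \<Rightarrow> nat \<Rightarrow> nat \<Rightarrow> nat" where "md n i j = (n + j - i) mod n"

lemma md_inv: assumes "i < n" "j < n" shows "(i + md n i j) mod n = j"
proof -
  have "(i + md n i j) mod n = (i + (n + j - i)) mod n" unfolding md_def by (simp add: mod_add_right_eq)
  also have "i + (n + j - i) = j + n * 1" using assms by simp
  finally show ?thesis using assms by simp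
qed

lemma md_inv2: assumes "i < n" "m < n" shows "md n i ((i + m) mod n) = m"
proof (cases "i + m < n")
  case True then show ?thesis unfolding md_def using assms by simp
next
  case False
  then have "(i + m) mod n = i + m - n" using assms by (simp add: mod_if)
  moreover have "n + (i + m - n) - i = m" using False by simp
  ultimately show ?thesis unfolding md_def using assms by simp
qed

lemma md_lt: "n > 0 \<Longrightarrow> md n i j < n" by (simp add: md_def)

lemma md_zero: assumes "i < n" "j < n" shows "md n i j = 0 \<longleftrightarrow> i = j"
proof
  assume "md n i j = 0"
  then have "(i + md n i j) mod n = i" using assms by simp
  then show "i = j" using md_inv[OF assms] by simp
next
  assume "i = j" then show "md n i j = 0" by (simp add: md_def)
qed

lemma sum_md: assumes "i < n" shows "(\<Sum>j<n. g (md n i j) j) = (\<Sum>m<n. g m ((i + m) mod n))"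
proof -
  have n: "n > 0" using assms by simp
  show ?thesis
    by (rule sum.reindex_bij_witness[where i = "\<lambda>m. (i + m) mod n" and j = "\<lambda>j. md n i j"])
       (use assms n md_inv md_inv2 md_lt in auto)
qed

definition cf :: "nat \<Rightarrow> nat \<Rightarrow> real" where
  "cf n m = (if m = 0 then real ((n - 1) div 2) / real n else 0)
           - (if 1 \<le> m \<and> m \<le> (n - 1) div 2 then 1 / real n else 0)"

definition Cm :: "nat \<Rightarrow> real mat" where "Cm n = Matrix.mat n n (\<lambda>(i,j). cf n (md n i j))"

lemma sum_cf: assumes "n > 0" shows "(\<Sum>m<n. cf n m) = 0"
proof -
  define k where "k = (n - 1) div 2"
  have k: "k < n" using assms unfolding k_def by auto
  have "(\<Sum>m<n. (if m = 0 then real k / real n else 0)) = real k / real n"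
    using assms by (simp add: sum.delta)
  moreover have "(\<Sum>m<n. (if 1 \<le> m \<and> m \<le> k then 1 / real n else 0)) = real k / real n"
  proof -
    have "(\<Sum>m<n. (if 1 \<le> m \<and> m \<le> k then 1 / real n else 0)) = (\<Sum>m\<in>{1..k}. 1 / real n)"
      by (rule sum.mono_neutral_cong_right) (use k in auto)
    then show ?thesis by simp
  qed
  ultimately show ?thesis unfolding cf_def k_def[symmetric] by (simp add: sum_subtractf)
qed

lemma Cm_std: assumes "n > 0" shows "standardized_laplacian n (Cm n)"
  unfolding standardized_laplacian_def
proof (intro conjI allI impI)
  show "Cm n \<in> carrier_mat n n" by (simp add: Cm_def)
next
  fix i assume i: "i < n"
  have "(\<Sum>j<n. Cm n $$ (i, j)) = (\<Sum>j<n. cf n (md n i j))" by (simp add: Cm_def i)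
  also have "\<dots> = (\<Sum>m<n. cf n m)" using sum_md[OF i, of "\<lambda>m j. cf n m"] by simp
  also have "\<dots> = 0" by (rule sum_cf[OF assms])
  finally show "(\<Sum>j<n. Cm n $$ (i, j)) = 0" .
next
  fix i j assume i: "i < n" and j: "j < n" and ij: "i \<noteq> j"
  then have "md n i j \<noteq> 0" using md_zero by simp
  then show "Cm n $$ (i, j) \<le> 0"
    using i j by (simp add: Cm_def cf_def)
next
  fix i j assume i: "i < n" and j: "j < n" and ij: "i \<noteq> j"
  then have "md n i j \<noteq> 0" using md_zero by simp
  then show "\<bar>Cm n $$ (i, j)\<bar> \<le> 1 / real n"
    using i j by (simp add: Cm_def cf_def)
qed

definition lam :: "nat \<Rightarrow> complex" where "lam n = (\<Sum>m<n. complex_of_real (cf n m) * ee n m)"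

lemma Cm_eig: assumes "n > 0" shows "eigenvalue (map_mat complex_of_real (Cm n)) (lam n)"
proof -
  define v where "v = Matrix.vec n (\<lambda>j. ee n j)"
  have "eigenvector (map_mat complex_of_real (Cm n)) v (lam n)"
    unfolding eigenvector_def
  proof (intro conjI)
    show "v \<in> carrier_vec (dim_row (map_mat complex_of_real (Cm n)))" by (simp add: v_def Cm_def)
    have "v $ 0 = 1" using assms by (simp add: v_def ee_def)
    then show "v \<noteq> 0\<^sub>v (dim_row (map_mat complex_of_real (Cm n)))"
      using assms by (auto simp: Cm_def)
    show "map_mat complex_of_real (Cm n) *\<^sub>v v = lam n \<cdot>\<^sub>v v"
    proof (rule eq_vecI)
      fix i assume "i < dim_vec (lam n \<cdot>\<^sub>v v)"
      then have i: "i < n" by (simp add: v_def)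
      have "(map_mat complex_of_real (Cm n) *\<^sub>v v) $ i = (\<Sum>j<n. complex_of_real (cf n (md n i j)) * ee n j)"
        using i by (simp add: Cm_def v_def scalar_prod_def lessThan_atLeast0)
      also have "\<dots> = (\<Sum>m<n. complex_of_real (cf n m) * ee n ((i + m) mod n))"
        using sum_md[OF i, of "\<lambda>m j. complex_of_real (cf n m) * ee n j"] by simp
      also have "\<dots> = (\<Sum>m<n. ee n i * (complex_of_real (cf n m) * ee n m))"
        by (intro sum.cong refl) (simp add: ee_mod[OF assms] ee_mult[symmetric] mult_ac)
      also have "\<dots> = lam n * v $ i" using i by (simp add: lam_def v_def sum_distrib_left mult_ac)
      finally show "(map_mat complex_of_real (Cm n) *\<^sub>v v) $ i = (lam n \<cdot>\<^sub>v v) $ i"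
        using i by (simp add: v_def)
    qed (simp add: Cm_def v_def)
  qed
  then show ?thesis unfolding eigenvalue_def by blast
qed

lemma Im_lam: assumes "n \<ge> 3" shows "Im (lam n) \<ge> cos (pi / real n) / (real n * sin (pi / real n))"
proof -
  define k where "k = (n - 1) div 2"
  have n0: "real n > 0" using assms by simp
  have k1: "k \<ge> 1" "k < n" using assms unfolding k_def by auto
  have "Im (lam n) = (\<Sum>m<n. cf n m * (- sin (2 * pi * real m / real n)))"
    by (simp add: lam_def Im_sum Im_ee)
  also have "\<dots> = (\<Sum>m\<in>{1..k}. sin (real m * (2 * pi / real n)) / real n)"
  proof -
    have "(\<Sum>m<n. cf n m * (- sin (2 * pi * real m / real n)))
        = (\<Sum>m<n. (if 1 \<le> m \<and> m \<le> k then sin (real m * (2 * pi / real n)) / real n else 0))"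
      by (intro sum.cong refl) (auto simp: cf_def k_def mult_ac)
    also have "\<dots> = (\<Sum>m\<in>{1..k}. sin (real m * (2 * pi / real n)) / real n)"
      by (rule sum.mono_neutral_cong_left[symmetric]) (use k1 in auto)
    finally show ?thesis .
  qed
  also have "\<dots> = (\<Sum>m\<in>{1..k}. sin (real m * (2 * pi / real n))) / real n"
    by (simp add: sum_divide_distrib)
  finally have e1: "Im (lam n) = (\<Sum>m\<in>{1..k}. sin (real m * (2 * pi / real n))) / real n" .
  have tel: "(\<Sum>m\<in>{1..k}. sin (real m * (2 * pi / real n))) * (2 * sin (pi / real n))
      = cos (pi / real n) - cos ((real k + 1/2) * (2 * pi / real n))"
    using sin_telescope[where K=k and t="2 * pi / real n"] by simp
  have spos: "sin (pi / real n) > 0" using assms by (intro sin_gt_zero) (auto simp: field_simps)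
  have "cos ((real k + 1/2) * (2 * pi / real n)) \<le> cos (pi - pi / real n)"
  proof (rule cos_monotone_0_pi_le)
    have "real n - 1 \<le> 2 * real k + 1" unfolding k_def by linarith
    then have "(real n - 1) * (pi / real n) \<le> (2 * real k + 1) * (pi / real n)"
      by (intro mult_right_mono) auto
    then show "pi - pi / real n \<le> (real k + 1/2) * (2 * pi / real n)"
      using n0 by (simp add: field_simps)
    have "2 * real k + 1 \<le> real n" unfolding k_def using assms by linarith
    then have "(2 * real k + 1) * (pi / real n) \<le> real n * (pi / real n)"
      by (intro mult_right_mono) auto
    then show "(real k + 1/2) * (2 * pi / real n) \<le> pi" using n0 by (simp add: field_simps)
    show "0 \<le> pi - pi / real n" using assms by (simp add: field_simps)
  qed
  then have cb: "cos ((real k + 1/2) * (2 * pi / real n)) \<le> - cos (pi / real n)" by simp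
  have "2 * cos (pi / real n) \<le> (\<Sum>m\<in>{1..k}. sin (real m * (2 * pi / real n))) * (2 * sin (pi / real n))"
    using tel cb by linarith
  then have "cos (pi / real n) / sin (pi / real n) \<le> (\<Sum>m\<in>{1..k}. sin (real m * (2 * pi / real n)))"
    using spos by (simp add: divide_le_eq mult.commute)
  then have "cos (pi / real n) / sin (pi / real n) / real n \<le> Im (lam n)"
    unfolding e1 using n0 by (intro divide_right_mono) auto
  then show ?thesis by (simp add: field_simps)
qed



lemma lim_f0: "(\<lambda>n. cos (pi / real n) / (real n * sin (pi / real n))) \<longlonglongrightarrow> inverse pi"
  by real_asymp

lemma lim_f: "(\<lambda>n. cos (pi / real n) / (real n * sin (pi / real n))) \<longlonglongrightarrow> 1 / pi"
  using lim_f0 by (simp add: inverse_eq_divide)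

theorem mainTheorem20:
  shows "h \<longlonglongrightarrow> 1 / pi"
proof (rule tendsto_sandwich[OF _ _ lim_f tendsto_const])
  define T where "T n = {Im k | k A. standardized_laplacian n A \<and> eigenvalue (map_mat complex_of_real A) k}" for n
  have hT: "h n = Sup (T n)" for n unfolding h_def T_def ..
  have ub: "x \<le> 1 / pi" if "x \<in> T n" for x n using that upper_bound unfolding T_def by blast
  have mem: "Im (lam n) \<in> T n" if "n \<ge> 3" for n
    unfolding T_def using Cm_std[of n] Cm_eig[of n] that by auto
  show "\<forall>\<^sub>F n in sequentially. cos (pi / real n) / (real n * sin (pi / real n)) \<le> h n"
  proof (rule eventually_sequentiallyI[of 3])
    fix n :: nat assume n: "n \<ge> 3"
    have "Im (lam n) \<le> Sup (T n)"
      by (rule cSup_upper[OF mem[OF n]]) (use ub in \<open>auto simp: bdd_above_def\<close>)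
    then show "cos (pi / real n) / (real n * sin (pi / real n)) \<le> h n"
      using Im_lam[OF n] hT[of n] by linarith
  qed
  show "\<forall>\<^sub>F n in sequentially. h n \<le> 1 / pi"
  proof (rule eventually_sequentiallyI[of 3])
    fix n :: nat assume n: "n \<ge> 3"
    have "Sup (T n) \<le> 1 / pi"
      by (rule cSup_least) (use mem[OF n] ub in auto)
    then show "h n \<le> 1 / pi" using hT by simp
  qed
qed

end
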